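(* Let $q\neq-1$ be real and let $n,m\ge0$ be integers. Then $$\sum_{j=0}^{n}(-1)^jq^{\binom{j}{2}}\begin{bmatrix} n\\ j\end{bmatrix}\prod_{i=n+m+1-j}^{n+m}(1+q^i)\;T_{2n+m-j}(1,s,q)=q^{n^2+mn}s^n\,T_m(1,s,q).$$
   Context: $T_0=1$, $T_1=x$, $T_n(x,s,q)=(1+q^{n-1})x\,T_{n-1}(x,s,q)+q^{n-1}s\,T_{n-2}(x,s,q)$ for $n\ge2$; $T_n(1,s,q)$ is its value at $x=1$. Notation: $[m]=1+q+\cdots+q^{m-1}$, $[m]!=[1]\cdots[m]$, $\begin{bmatrix} m\\ j\end{bmatrix}=\frac{[m]!}{[j]![m-j]!}$; empty products equal $1$. *)

theory Defs
  imports Complex_Main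
begin

fun T :: "nat \<Rightarrow> real \<Rightarrow> real \<Rightarrow> real \<Rightarrow> real" where
  "T 0 x s q = 1"
| "T (Suc 0) x s q = x"
| "T (Suc (Suc n)) x s q =
     (1 + q ^ (Suc n)) * x * T (Suc n) x s q + q ^ (Suc n) * s * T n x s q"

definition qint :: "real \<Rightarrow> nat \<Rightarrow> real" where
  "qint q m = (\<Sum>i<m. q ^ i)"

definition qfact :: "real \<Rightarrow> nat \<Rightarrow> real" where
  "qfact q m = (\<Prod>k=1..m. qint q k)"

definition qbinom :: "real \<Rightarrow> nat \<Rightarrow> nat \<Rightarrow> real" where
  "qbinom q m j = qfact q m / (qfact q j * qfact q (m - j))"

end

theory Submission
  imports Defs
begin

lemma qint_Suc: "qint q (Suc k) = qint q k + q ^ k"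
  by (simp add: qint_def)

lemma qint_add: "qint q (a + b) = qint q a + q ^ a * qint q b"
  by (induction b) (simp_all add: qint_def algebra_simps power_add)

lemma qint_nz:
  assumes "q \<noteq> -1" "k > 0" shows "qint q k \<noteq> 0"
proof
  assume h: "qint q k = 0"
  show False
  proof (cases "q = 1")
    case True then show ?thesis using h assms by (simp add: qint_def)
  next
    case False
    then have "(1 - q ^ k) / (1 - q) = 0" using h by (simp add: qint_def sum_gp_strict)
    then have "q ^ k = 1" using False by simp
    then have "\<bar>q\<bar> = 1" using power_eq_1_iff[of q k] assms by auto
    then show ?thesis using False assms by (auto simp: abs_if split: if_splits)
  qed
qed

lemma qfact_Suc: "qfact q (Suc k) = qfact q k * qint q (Suc k)"
  by (simp add: qfact_def)

lemma qfact_nz: "q \<noteq> -1 \<Longrightarrow> qfact q k \<noteq> 0"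
  by (induction k) (simp_all add: qfact_Suc qint_nz qfact_def[of q 0])

lemma qbinom_0: "q \<noteq> -1 \<Longrightarrow> qbinom q n 0 = 1"
  by (simp add: qbinom_def qfact_nz qfact_def[of q 0])

lemma qbinom_n: "q \<noteq> -1 \<Longrightarrow> qbinom q n n = 1"
  by (simp add: qbinom_def qfact_nz qfact_def[of q 0])

definition PP :: "real \<Rightarrow> nat \<Rightarrow> nat \<Rightarrow> real" where
  "PP q N j = (\<Prod>k<j. 1 + q ^ (N - k))"

lemma PP_Suc: "PP q M (Suc j) = PP q M j * (1 + q ^ (M - j))"
  by (simp add: PP_def)

lemma PP_shift: "PP q (Suc M) (Suc j) = (1 + q ^ (Suc M)) * PP q M j"
  by (simp add: PP_def prod.lessThan_Suc_shift del: prod.lessThan_Suc)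

lemma PP_eq: "j \<le> N + 1 \<Longrightarrow> (\<Prod>i=N+1-j..N. 1 + q ^ i) = PP q N j"
proof (induction j)
  case 0 then show ?case by (simp add: PP_def)
next
  case (Suc j)
  have "{N + 1 - Suc j..N} = insert (N - j) {N + 1 - j..N}"
    using Suc.prems Icc_eq_insert_lb_nat[of "N - j" N] by (simp add: Suc_diff_le)
  then show ?case using Suc by (simp add: PP_Suc)
qed

definition cc :: "real \<Rightarrow> nat \<Rightarrow> nat \<Rightarrow> nat \<Rightarrow> real" where
  "cc q n m j = (-1) ^ j * q ^ (j choose 2) * qbinom q n j * PP q (n + m) j"

definition SS :: "real \<Rightarrow> real \<Rightarrow> nat \<Rightarrow> nat \<Rightarrow> real" where
  "SS q s n m = (\<Sum>j=0..n. cc q n m j * T (2*n+m-j) 1 s q)"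

lemma qint_ident:
  "q^i * qint q (a + b) * (1 + q^(m+a+1)) =
   q^i * qint q a * (1 + q^(m+a+b+1)) + q^(a+i) * (1 + q^(m+1)) * qint q b"
proof -
  have c: "qint q a + q^a*qint q b - (qint q b + q^b * qint q a) = 0"
    using qint_add[of q a b] qint_add[of q b a] by (simp add: add.commute)
  have "q^i * qint q (a + b) * (1 + q^(m+a+1)) -
   (q^i * qint q a * (1 + q^(m+a+b+1)) + q^(a+i) * (1 + q^(m+1)) * qint q b)
   = q^i*q^(m+a+1) * (qint q a + q^a*qint q b - (qint q b + q^b * qint q a))"
    by (simp add: qint_add power_add algebra_simps)
  then show ?thesis using c by simp
qed

lemma coeff_mid:
  assumes q: "q \<noteq> -1" and i: "i < n"
  shows "cc q (Suc n) m (Suc i) = cc q n (m+2) (Suc i) - q^n * (1 + q^(m+1)) * cc q n (m+1) i"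
proof -
  obtain a where n: "n = i + a" and a: "a > 0" using i by (metis add_diff_inverse_nat less_imp_le_nat not_less zero_less_diff)
  define K where "K = qfact q n / (qfact q (Suc i) * qfact q a)"
  have fa: "qfact q a = qfact q (a - 1) * qint q a" using a qfact_Suc[of q "a-1"] by simp
  have b1: "qbinom q (Suc n) (Suc i) = K * qint q (Suc n)"
    unfolding qbinom_def K_def using n by (simp add: qfact_Suc)
  have b2: "qbinom q n (Suc i) = K * qint q a"
    unfolding qbinom_def K_def using n a qint_nz[OF q a] qfact_nz[OF q] fa
    by (simp add: field_simps)
  have b3: "qbinom q n i = K * qint q (Suc i)"
    unfolding qbinom_def K_def using n qint_nz[OF q, of "Suc i"] qfact_nz[OF q]
    by (simp add: field_simps qfact_Suc)
  define R where "R = PP q (n + m + 1) i"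
  have p1: "PP q (Suc n + m) (Suc i) = R * (1 + q^(m+a+1))"
  proof -
    have "Suc n + m - i = m+a+1" "Suc n + m = n+m+1" using n by simp_all
    then show ?thesis unfolding R_def by (simp only: PP_Suc)
  qed
  have p2: "PP q (n + (m+2)) (Suc i) = (1 + q^(m+a+(Suc i)+1)) * R"
    proof -
    have "m+a+Suc i+1 = Suc (n+m+1)" "n + (m+2) = Suc (n+m+1)" using n by simp_all
    then show ?thesis unfolding R_def by (simp only: PP_shift)
  qed
  have p3: "PP q (n + (m+1)) i = R" unfolding R_def by simp
  have ch: "Suc i choose 2 = (i choose 2) + i"
    by (simp add: numeral_2_eq_2)
  have id: "q^i * qint q (a + Suc i) * (1 + q^(m+a+1)) =
     q^i * qint q a * (1 + q^(m+a+Suc i+1)) + q^(a+i) * (1 + q^(m+1)) * qint q (Suc i)"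
    by (rule qint_ident)
  have e: "Suc n = a + Suc i" using n by simp
  have "cc q (Suc n) m (Suc i) = - ((-1)^i * q^(i choose 2) * K * R) *
          (q^i * qint q (a + Suc i) * (1 + q^(m+a+1)))"
    unfolding cc_def b1 p1 ch e[symmetric] by (simp add: power_add algebra_simps)
  also have "\<dots> = - ((-1)^i * q^(i choose 2) * K * R) *
     (q^i * qint q a * (1 + q^(m+a+Suc i+1)) + q^(a+i) * (1 + q^(m+1)) * qint q (Suc i))"
    using id by simp
  also have "\<dots> = cc q n (m+2) (Suc i) - q^n * (1 + q^(m+1)) * cc q n (m+1) i"
    unfolding cc_def b2 b3 p2 p3 ch using n by (simp add: power_add algebra_simps)
  finally show ?thesis .
qed

lemma coeff_last:
  assumes q: "q \<noteq> -1"
  shows "cc q (Suc n) m (Suc n) = - (q^n * (1 + q^(m+1)) * cc q n (m+1) n)"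
proof -
  have ch: "Suc n choose 2 = (n choose 2) + n" by (simp add: numeral_2_eq_2)
  have p: "PP q (Suc n + m) (Suc n) = PP q (n + (m+1)) n * (1 + q^(m+1))"
    by (simp add: PP_Suc)
  show ?thesis unfolding cc_def p ch using qbinom_n[OF q]
    by (simp add: power_add algebra_simps)
qed

lemma coeff_first:
  assumes q: "q \<noteq> -1"
  shows "cc q n m 0 = 1"
  using qbinom_0[OF q] by (simp add: cc_def PP_def numeral_2_eq_2)

lemma step:
  assumes q: "q \<noteq> -1"
  shows "SS q s (Suc n) m = SS q s n (m+2) - q^n * (1 + q^(m+1)) * SS q s n (m+1)"
proof -
  define t where "t k = T k 1 s q" for k
  define A where "A j = (if j \<le> n then cc q n (m+2) j else 0)" for j
  define B where "B j = (if j = 0 then 0 else q^n * (1 + q^(m+1)) * cc q n (m+1) (j - 1))" for j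
  have co: "cc q (Suc n) m j = A j - B j" if "j \<le> Suc n" for j
  proof -
    consider "j = 0" | i where "j = Suc i" "i < n" | "j = Suc n"
    proof (cases j)
      case 0 then show ?thesis using that(1) by simp
    next
      case (Suc i)
      then show ?thesis using that(2)[of i] that(3) \<open>j \<le> Suc n\<close> by (cases "i < n") auto
    qed
    then show ?thesis
    proof cases
      case 1 then show ?thesis using coeff_first[OF q] by (simp add: A_def B_def)
    next
      case 2 then show ?thesis using coeff_mid[OF q, of i n m] by (simp add: A_def B_def)
    next
      case 3 then show ?thesis using coeff_last[OF q, of n m] by (simp add: A_def B_def)
    qed
  qed
  have "SS q s (Suc n) m = (\<Sum>j=0..Suc n. (A j - B j) * t (2*Suc n+m-j))"
    unfolding SS_def t_def using co by (intro sum.cong) auto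
  also have "\<dots> = (\<Sum>j=0..Suc n. A j * t (2*Suc n+m-j)) - (\<Sum>j=0..Suc n. B j * t (2*Suc n+m-j))"
    by (simp add: left_diff_distrib sum_subtractf)
  also have "(\<Sum>j=0..Suc n. A j * t (2*Suc n+m-j)) = SS q s n (m+2)"
    unfolding SS_def t_def A_def by (simp add: sum.atLeast0_atMost_Suc)
  also have "(\<Sum>j=0..Suc n. B j * t (2*Suc n+m-j)) = q^n * (1 + q^(m+1)) * SS q s n (m+1)"
  proof -
    have "(\<Sum>j=0..Suc n. B j * t (2*Suc n+m-j)) = B 0 * t (2*Suc n+m-0) + (\<Sum>i=0..n. B (Suc i) * t (2*Suc n+m-Suc i))"
      by (subst sum.atLeast0_atMost_Suc_shift) (simp add: comp_def)
    also have "\<dots> = (\<Sum>i=0..n. q^n * (1 + q^(m+1)) * (cc q n (m+1) i * t (2*n+(m+1)-i)))"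
      unfolding B_def by (simp add: mult.assoc)
    also have "\<dots> = q^n * (1 + q^(m+1)) * SS q s n (m+1)"
      unfolding SS_def t_def by (simp add: sum_distrib_left)
    finally show ?thesis .
  qed
  finally show ?thesis .
qed

lemma main:
  assumes q: "q \<noteq> -1"
  shows "SS q s n m = q ^ (n^2 + m*n) * s ^ n * T m 1 s q"
proof (induction n arbitrary: m)
  case 0 then show ?case using coeff_first[OF q] by (simp add: SS_def)
next
  case (Suc n)
  have rec: "T (Suc (Suc m)) 1 s q - (1 + q^(m+1)) * T (Suc m) 1 s q = q^(m+1) * s * T m 1 s q"
    by simp
  have "SS q s (Suc n) m = q ^ (n^2 + (m+2)*n) * s ^ n * T (Suc (Suc m)) 1 s q
      - q^n * (1 + q^(m+1)) * (q ^ (n^2 + (m+1)*n) * s ^ n * T (Suc m) 1 s q)"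
    using step[OF q] Suc by (simp add: numeral_2_eq_2)
  also have "\<dots> = q ^ (n^2 + (m+2)*n) * s ^ n *
      (T (Suc (Suc m)) 1 s q - (1 + q^(m+1)) * T (Suc m) 1 s q)"
    by (simp add: power_add algebra_simps)
  also have "\<dots> = q ^ (n^2 + (m+2)*n) * s ^ n * (q^(m+1) * s * T m 1 s q)"
    using rec by simp
  also have "\<dots> = q ^ ((Suc n)^2 + m * Suc n) * s ^ Suc n * T m 1 s q"
    by (simp add: power2_eq_square power_add algebra_simps)
  finally show ?case .
qed

theorem theorem3p2:
  fixes q s :: real and n m :: nat
  assumes "q \<noteq> -1"
  shows "(\<Sum>j=0..n. (-1) ^ j * q ^ (j choose 2) * qbinom q n j
            * (\<Prod>i=n+m+1-j..n+m. (1 + q ^ i)) * T (2*n+m-j) 1 s q)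
         = q ^ (n^2 + m*n) * s ^ n * T m 1 s q"
proof -
  have "(\<Sum>j=0..n. (-1) ^ j * q ^ (j choose 2) * qbinom q n j
            * (\<Prod>i=n+m+1-j..n+m. (1 + q ^ i)) * T (2*n+m-j) 1 s q) = SS q s n m"
    unfolding SS_def cc_def
  proof (intro sum.cong refl)
    fix j assume "j \<in> {0..n}"
    then have "(\<Prod>i=n+m+1-j..n+m. (1 + q ^ i)) = PP q (n+m) j" by (intro PP_eq) auto
    then show "(-1) ^ j * q ^ (j choose 2) * qbinom q n j
            * (\<Prod>i=n+m+1-j..n+m. (1 + q ^ i)) * T (2*n+m-j) 1 s q =
         (-1) ^ j * q ^ (j choose 2) * qbinom q n j * PP q (n + m) j * T (2*n+m-j) 1 s q" by simp
  qed
  then show ?thesis using main[OF assms] by simp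
qed

end
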